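(* Let $$A = \begin{pmatrix} p & q \\ r & s \end{pmatrix} \qquad \text{and} \qquad B = \begin{pmatrix} p' & q' \\ r' & s' \end{pmatrix}$$ be elements of $Y(\mathbb{Z}[\omega]) - \{ I_2 \}$. If $rs' - r's = 0$ then $A = B$.
   Context: Let $\omega = e^{2\pi i/3}$ and let $\mathbb{Z}[\omega]$ be the ring of Eisenstein integers (a PID), with unit group $\mathbb{Z}[\omega]^{\times} = \{\pm 1, \pm\omega, \pm\omega^2\}$. Fix a set of representatives $(\mathbb{Z}[\omega] - \{0\})/\mathbb{Z}[\omega]^{\times}$ of the nonzero elements up to units, and for each nonzero $c$ a set of representatives $\mathbb{Z}[\omega]/c\mathbb{Z}[\omega]$ of the residue classes modulo $c$ (these representatives are regarded as elements of $\mathbb{Z}[\omega]$). Define $$Y(\mathbb{Z}[\omega]) = \Big\{ \begin{pmatrix} a & b \\ c & d \end{pmatrix} \in SL_2(\mathbb{Z}[\omega]) \;\Big\vert\; c \in (\mathbb{Z}[\omega] - \{0\})/\mathbb{Z}[\omega]^{\times},\ a \in \mathbb{Z}[\omega]/c\mathbb{Z}[\omega] \Big\} \cup \{ I_2 \},$$ where $I_2$ is the $2\times 2$ identity matrix. *)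

theory Defs
  imports Complex_Main
begin

definition omega :: complex where
  "omega = cis (2 * pi / 3)"

definition Eis :: "complex set" where
  "Eis = {of_int a + of_int b * omega | a b. True}"

definition Eis_units :: "complex set" where
  "Eis_units = {1, -1, omega, -omega, omega^2, -(omega^2)}"

definition assoc_reps :: "complex set \<Rightarrow> bool" where
  "assoc_reps R \<longleftrightarrow> R \<subseteq> Eis - {0} \<and>
     (\<forall>z \<in> Eis - {0}. \<exists>!c. c \<in> R \<and> (\<exists>u \<in> Eis_units. z = u * c))"

definition eis_cong :: "complex \<Rightarrow> complex \<Rightarrow> complex \<Rightarrow> bool" where
  "eis_cong a b c \<longleftrightarrow> (\<exists>k \<in> Eis. a - b = k * c)"

definition residue_reps :: "complex \<Rightarrow> complex set \<Rightarrow> bool" where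
  "residue_reps c S \<longleftrightarrow> S \<subseteq> Eis \<and> (\<forall>z \<in> Eis. \<exists>!a. a \<in> S \<and> eis_cong a z c)"

text \<open>2x2 matrices (a b; c d) are represented as tuples (a, b, c, d).\<close>
definition SL2_Eis :: "(complex \<times> complex \<times> complex \<times> complex) set" where
  "SL2_Eis = {(a, b, c, d). a \<in> Eis \<and> b \<in> Eis \<and> c \<in> Eis \<and> d \<in> Eis \<and> a * d - b * c = 1}"

definition I2 :: "complex \<times> complex \<times> complex \<times> complex" where
  "I2 = (1, 0, 0, 1)"

definition Y_Eis :: "complex set \<Rightarrow> (complex \<Rightarrow> complex set) \<Rightarrow> (complex \<times> complex \<times> complex \<times> complex) set" where
  "Y_Eis R Res = {(a, b, c, d). (a, b, c, d) \<in> SL2_Eis \<and> c \<in> R \<and> a \<in> Res c} \<union> {I2}"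

end

theory Submission
  imports Defs
begin
lemma omega_eq: "omega = Complex (-1/2) (sqrt 3 / 2)"
proof -
  have c: "cos (2*pi/3) = -1/2"
    using cos_pi_minus[of "pi/3"] by (simp add: cos_60 field_simps)
  have s: "sin (2*pi/3) = sqrt 3 / 2"
    using sin_pi_minus[of "pi/3"] by (simp add: sin_60 field_simps)
  show ?thesis unfolding omega_def using c s by (simp add: cis.ctr)
qed

lemma omega_sq: "omega^2 = -1 - omega"
  by (simp add: omega_eq complex_eq_iff power2_eq_square field_simps)

lemma Eis_iff: "z \<in> Eis \<longleftrightarrow> (\<exists>a b. z = of_int a + of_int b * omega)"
  unfolding Eis_def by auto

lemma Eis_0: "0 \<in> Eis" unfolding Eis_iff by (rule exI[of _ 0], rule exI[of _ 0]) simp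

lemma Eis_diff: "x \<in> Eis \<Longrightarrow> y \<in> Eis \<Longrightarrow> x - y \<in> Eis"
proof -
  assume "x \<in> Eis" "y \<in> Eis"
  then obtain a b c d where "x = of_int a + of_int b * omega" "y = of_int c + of_int d * omega"
    unfolding Eis_iff by blast
  hence "x - y = of_int (a - c) + of_int (b - d) * omega" by (simp add: algebra_simps)
  thus ?thesis unfolding Eis_iff by blast
qed

lemma Eis_mult: "x \<in> Eis \<Longrightarrow> y \<in> Eis \<Longrightarrow> x * y \<in> Eis"
  unfolding Eis_iff
proof (elim exE)
  fix a b c d
  assume x: "x = of_int a + of_int b * omega" and y: "y = of_int c + of_int d * omega"
  have "x * y = of_int a * of_int c + (of_int a * of_int d + of_int b * of_int c) * omega
        + of_int b * of_int d * omega^2"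
    by (simp add: x y algebra_simps power2_eq_square)
  also have "\<dots> = of_int (a*c - b*d) + of_int (a*d + b*c - b*d) * omega"
    by (simp add: omega_sq algebra_simps)
  finally show "\<exists>e f. x * y = of_int e + of_int f * omega" by blast
qed

lemma norm_Eis: "cmod (of_int a + of_int b * omega)^2 = of_int (a^2 - a*b + b^2)"
proof -
  have "(0::real) \<le> (real_of_int a - real_of_int b/2)^2 + 3 * (real_of_int b)^2/4" by simp
  also have "\<dots> = real_of_int a * real_of_int a + real_of_int b * real_of_int b - real_of_int a * real_of_int b"
    by (simp add: power2_eq_square field_simps)
  finally have h: "0 \<le> real_of_int a * real_of_int a + real_of_int b * real_of_int b - real_of_int a * real_of_int b" .
  show ?thesis using h by (simp add: omega_eq cmod_def power2_eq_square algebra_simps)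

qed
lemma Eis_unit:
  assumes "k \<in> Eis" "k' \<in> Eis" "k * k' = 1"
  shows "k \<in> Eis_units"
proof -
  obtain a b where k: "k = of_int a + of_int b * omega" using assms(1) Eis_iff by blast
  obtain c d where k': "k' = of_int c + of_int d * omega" using assms(2) Eis_iff by blast
  have "cmod k ^2 * cmod k' ^2 = 1"
    using assms(3) by (metis norm_mult norm_one power_mult_distrib power_one)
  hence "real_of_int ((a^2 - a*b + b^2) * (c^2 - c*d + d^2)) = 1"
    by (simp add: k k' norm_Eis)
  hence e: "(a^2 - a*b + b^2) * (c^2 - c*d + d^2) = 1" by linarith
  have n1: "a^2 - a*b + b^2 \<ge> 0" "c^2 - c*d + d^2 \<ge> 0"
    using norm_Eis[of a b] norm_Eis[of c d] by (metis of_int_0_le_iff zero_le_power2)+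
  have N: "a^2 - a*b + b^2 = 1"
    using e n1 pos_zmult_eq_1_iff by (metis mult.commute order_le_less mult_zero_left zero_neq_one)
  have "(2*a - b)^2 + 3*b^2 = 4" using N by (simp add: power2_eq_square algebra_simps)
  hence "b^2 \<le> 1" by (smt (verit) zero_le_power2)
  hence "\<bar>b\<bar> \<le> 1" by (simp add: abs_square_le_1)
  hence b: "b \<in> {-1,0,1}" by auto
  have "(2*b - a)^2 + 3*a^2 = 4" using N by (simp add: power2_eq_square algebra_simps)
  hence "a^2 \<le> 1" by (smt (verit) zero_le_power2)
  hence "\<bar>a\<bar> \<le> 1" by (simp add: abs_square_le_1)
  hence a: "a \<in> {-1,0,1}" by auto
  from a b N show ?thesis
    unfolding Eis_units_def k by (auto simp: omega_sq)
qed


theorem lemma2p13: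
  fixes R :: "complex set" and Res :: "complex \<Rightarrow> complex set"
    and p q r s p' q' r' s' :: complex
  assumes "assoc_reps R"
    and "\<forall>c \<in> Eis - {0}. residue_reps c (Res c)"
    and "(p, q, r, s) \<in> Y_Eis R Res - {I2}"
    and "(p', q', r', s') \<in> Y_Eis R Res - {I2}"
    and "r * s' - r' * s = 0"
  shows "(p, q, r, s) = (p', q', r', s')"
proof -
  have R: "R \<subseteq> Eis - {0}" using assms(1) unfolding assoc_reps_def by blast
  have r00: "r \<noteq> 0" "r' \<noteq> 0" using assms(3,4) R unfolding Y_Eis_def I2_def by auto
  from assms(3) r00 have A: "p \<in> Eis" "q \<in> Eis" "r \<in> Eis" "s \<in> Eis" "p*s - q*r = 1" "r \<in> R" "p \<in> Res r"
    unfolding Y_Eis_def SL2_Eis_def I2_def by auto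
  from assms(4) r00 have B: "p' \<in> Eis" "q' \<in> Eis" "r' \<in> Eis" "s' \<in> Eis" "p'*s' - q'*r' = 1" "r' \<in> R" "p' \<in> Res r'"
    unfolding Y_Eis_def SL2_Eis_def I2_def by auto
  have r0: "r \<noteq> 0" "r' \<noteq> 0" using r00 by auto
  have rs: "r * s' = r' * s" using assms(5) by simp
  define k where "k = p * s' - q * r'"
  define k' where "k' = p' * s - q' * r"
  have "r' = r' * (p*s - q*r)" using A(5) by simp
  also have "\<dots> = p * (r * s') - q * r * r'" using rs by (simp add: algebra_simps)
  also have "\<dots> = r * k" by (simp add: k_def algebra_simps)
  finally have rk: "r' = r * k" .
  have "r = r * (p'*s' - q'*r')" using B(5) by simp
  also have "\<dots> = p' * (r' * s) - q' * r * r'" using rs by (simp add: algebra_simps)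
  also have "\<dots> = r' * k'" by (simp add: k'_def algebra_simps)
  finally have rk': "r = r' * k'" .
  have kE: "k \<in> Eis" "k' \<in> Eis" unfolding k_def k'_def
    using A B by (auto intro!: Eis_diff Eis_mult)
  have "r * 1 = r * (k * k')" using rk rk' by (metis mult.assoc mult.commute mult_1_right)
  hence "k * k' = 1" using r0 by simp
  hence ku: "k \<in> Eis_units" using Eis_unit kE by blast
  have "r' \<in> Eis - {0}" using B(6) R by blast
  then have "\<exists>!c. c \<in> R \<and> (\<exists>u \<in> Eis_units. r' = u * c)" using assms(1) unfolding assoc_reps_def by blast
  moreover have "r \<in> R \<and> (\<exists>u \<in> Eis_units. r' = u * r)" using A(6) ku rk by (auto simp: mult.commute)
  moreover have "r' \<in> R \<and> (\<exists>u \<in> Eis_units. r' = u * r')" using B(6) unfolding Eis_units_def by auto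
  ultimately have rr: "r' = r" by blast
  have ss: "s' = s" using rs r0 rr by simp
  have pp0: "p' - p = (p*q' - p'*q) * r"
  proof -
    have "p' - p = p' * (p*s - q*r) - p * (p'*s - q'*r)" using A(5) B(5) rr ss by simp
    also have "\<dots> = (p*q' - p'*q) * r" by (simp add: algebra_simps)
    finally show ?thesis .
  qed
  have "r \<in> Eis - {0}" using A(6) R by blast
  hence rr_res: "residue_reps r (Res r)" using assms(2) by blast
  hence "\<exists>!a. a \<in> Res r \<and> eis_cong a p r" using A(1) unfolding residue_reps_def by blast
  moreover have "eis_cong p p r" unfolding eis_cong_def using Eis_0 by force
  moreover have "eis_cong p' p r" unfolding eis_cong_def using pp0 A B
    by (auto intro!: bexI[of _ "p*q' - p'*q"] Eis_diff Eis_mult)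
  ultimately have pp: "p' = p" using A(7) B(7) rr by blast
  have "q * r = q' * r" using A(5) B(5) pp ss rr by (simp add: algebra_simps)
  hence "q' = q" using r0 by simp
  thus ?thesis using pp rr ss by simp
qed

end
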